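(* For all $c\in[0,\overline{c}]$, $\lim_{x\to\infty}V(x,c)=\overline{c}/q$.
   Context: Cramér–Lundberg model: the uncontrolled surplus is $X_t=x+pt-\sum_{i=1}^{N_t}U_i$, where $x\ge0$ is the initial surplus, $p>0$ the premium rate, $N_t$ a Poisson process with intensity $\beta>0$, and the claims $U_i$ are i.i.d. positive random variables, independent of $N$, with continuous distribution function $F$; $p>\beta\mathbb{E}[U_1]$. Standing assumption (A1): $F$ is globally Lipschitz with constant $K>0$. Let $(\mathcal{F}_t)$ be the completed filtration generated by $X$. Fix $\overline{c}>0$ and $q>0$. $\Pi_{x,c,\overline{c}}$ is the set of càdlàg, adapted, non-decreasing processes $C$ with $c\le C_t\le\overline{c}$; $X^C_t=X_t-\int_0^tC_sds$ ($X_0=x$), $\tau=\inf\{t\ge0:X^C_t<0\}$, $J(x;C)=\mathbb{E}[\int_0^\tau e^{-qs}C_sds]$, $V(x,c)=\sup_{C\in\Pi_{x,c,\overline{c}}}J(x;C)$. Convention: only strategies are considered such that if $C_{t^-}=p$ and $X^C_t=0$ for some $t>0$ then $C_s=p$ for $s\ge t$ until ruin; the only strategy in $\Pi_{0,p,\overline{c}}$ is to pay at rate $p$ until the first claim. *)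

theory Defs
  imports "HOL-Probability.Probability"
begin

text \<open>The Poisson process N
with intensity beta is realised through i.i.d. Exp(beta) inter-arrival times T i:
the n-th claim arrives at time T 0 + ... + T n.\<close>

definition CL_N :: "(nat \<Rightarrow> 'a \<Rightarrow> real) \<Rightarrow> real \<Rightarrow> 'a \<Rightarrow> nat" where
  "CL_N T t \<omega> = card {n. (\<Sum>i\<le>n. T i \<omega>) \<le> t}"

definition CL_X :: "real \<Rightarrow> real \<Rightarrow> (nat \<Rightarrow> 'a \<Rightarrow> real) \<Rightarrow> (nat \<Rightarrow> 'a \<Rightarrow> real)
    \<Rightarrow> real \<Rightarrow> 'a \<Rightarrow> real" where
  "CL_X x p T U t \<omega> = x + p * t - (\<Sum>i<CL_N T t \<omega>. U i \<omega>)"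

definition CL_XC :: "real \<Rightarrow> real \<Rightarrow> (nat \<Rightarrow> 'a \<Rightarrow> real) \<Rightarrow> (nat \<Rightarrow> 'a \<Rightarrow> real)
    \<Rightarrow> (real \<Rightarrow> 'a \<Rightarrow> real) \<Rightarrow> real \<Rightarrow> 'a \<Rightarrow> real" where
  "CL_XC x p T U C t \<omega> = CL_X x p T U t \<omega> - integral {0..t} (\<lambda>s. C s \<omega>)"

definition ruin_time :: "real \<Rightarrow> real \<Rightarrow> (nat \<Rightarrow> 'a \<Rightarrow> real) \<Rightarrow> (nat \<Rightarrow> 'a \<Rightarrow> real)
    \<Rightarrow> (real \<Rightarrow> 'a \<Rightarrow> real) \<Rightarrow> 'a \<Rightarrow> ereal" where
  "ruin_time x p T U C \<omega> = Inf {ereal t | t. 0 \<le> t \<and> CL_XC x p T U C t \<omega> < 0}"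

definition CL_filtration :: "'a measure \<Rightarrow> real \<Rightarrow> real \<Rightarrow> (nat \<Rightarrow> 'a \<Rightarrow> real)
    \<Rightarrow> (nat \<Rightarrow> 'a \<Rightarrow> real) \<Rightarrow> real \<Rightarrow> 'a set set" where
  "CL_filtration M x p T U t =
     {A. A \<subseteq> space M \<and>
        (\<exists>B \<in> sigma_sets (space M)
               {CL_X x p T U s -` D \<inter> space M | s D. 0 \<le> s \<and> s \<le> t \<and> D \<in> sets borel}.
          \<exists>N \<in> null_sets M. (A - B) \<union> (B - A) \<subseteq> N)}"

definition admissible :: "'a measure \<Rightarrow> real \<Rightarrow> real \<Rightarrow> (nat \<Rightarrow> 'a \<Rightarrow> real)
    \<Rightarrow> (nat \<Rightarrow> 'a \<Rightarrow> real) \<Rightarrow> real \<Rightarrow> real \<Rightarrow> (real \<Rightarrow> 'a \<Rightarrow> real) \<Rightarrow> bool" where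
  "admissible M x p T U c cbar C \<longleftrightarrow>
     \<comment> \<open>cadlag paths\<close>
     (\<forall>\<omega>\<in>space M. \<forall>t\<ge>0. continuous (at_right t) (\<lambda>s. C s \<omega>)) \<and>
     (\<forall>\<omega>\<in>space M. \<forall>t>0. \<exists>l. ((\<lambda>s. C s \<omega>) \<longlongrightarrow> l) (at_left t)) \<and>
     \<comment> \<open>adapted to the completed filtration generated by X\<close>
     (\<forall>t\<ge>0. \<forall>D\<in>sets borel. {\<omega>\<in>space M. C t \<omega> \<in> D} \<in> CL_filtration M x p T U t) \<and>
     \<comment> \<open>non-decreasing, with values in [c, cbar]\<close>
     (\<forall>\<omega>\<in>space M. mono_on {0..} (\<lambda>t. C t \<omega>)) \<and>
     (\<forall>\<omega>\<in>space M. \<forall>t\<ge>0. c \<le> C t \<omega> \<and> C t \<omega> \<le> cbar) \<and>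
     \<comment> \<open>convention: once paying p with zero surplus, keep paying p until ruin\<close>
     (\<forall>\<omega>\<in>space M. \<forall>t>0.
        ((\<lambda>s. C s \<omega>) \<longlongrightarrow> p) (at_left t) \<and> CL_XC x p T U C t \<omega> = 0 \<longrightarrow>
        (\<forall>s\<ge>t. ereal s < ruin_time x p T U C \<omega> \<longrightarrow> C s \<omega> = p)) \<and>
     \<comment> \<open>convention: the only strategy in Pi_{0,p,cbar} pays p until the first claim (= ruin)\<close>
     (x = 0 \<and> c = p \<longrightarrow>
        (\<forall>\<omega>\<in>space M. \<forall>t\<ge>0. ereal t < ruin_time x p T U C \<omega> \<longrightarrow> C t \<omega> = p))"

definition CL_J :: "'a measure \<Rightarrow> real \<Rightarrow> real \<Rightarrow> real \<Rightarrow> (nat \<Rightarrow> 'a \<Rightarrow> real)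
    \<Rightarrow> (nat \<Rightarrow> 'a \<Rightarrow> real) \<Rightarrow> (real \<Rightarrow> 'a \<Rightarrow> real) \<Rightarrow> ennreal" where
  "CL_J M q x p T U C =
     (\<integral>\<^sup>+ \<omega>. (\<integral>\<^sup>+ s. indicator {s. 0 \<le> s \<and> ereal s < ruin_time x p T U C \<omega>} s
                     * ennreal (exp (- q * s) * C s \<omega>) \<partial>lborel) \<partial>M)"

definition CL_V :: "'a measure \<Rightarrow> real \<Rightarrow> real \<Rightarrow> real \<Rightarrow> (nat \<Rightarrow> 'a \<Rightarrow> real)
    \<Rightarrow> (nat \<Rightarrow> 'a \<Rightarrow> real) \<Rightarrow> real \<Rightarrow> real \<Rightarrow> ennreal" where
  "CL_V M q cbar p T U x c =
     (SUP C \<in> {C. admissible M x p T U c cbar C}. CL_J M q x p T U C)"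

end

theory Submission
  imports Defs
begin


lemma ruin_ge:
  fixes T U :: "nat \<Rightarrow> 'a \<Rightarrow> real"
  assumes T0: "\<forall>i. 0 \<le> T i \<omega>" and Pn: "(\<Sum>i\<le>n. T i \<omega>) > b"
    and Ux: "(\<Sum>i<n. \<bar>U i \<omega>\<bar>) + cbar * b \<le> x" and "0 \<le> b" "p > 0" "cbar \<ge> 0"
  shows "ereal b \<le> ruin_time x p T U (\<lambda>t \<omega>. cbar) \<omega>"
  unfolding ruin_time_def
proof (rule Inf_greatest, clarify)
  fix t assume t: "0 \<le> t" "CL_XC x p T U (\<lambda>t \<omega>. cbar) t \<omega> < 0"
  show "ereal b \<le> ereal t"
  proof (rule ccontr)
    assume "\<not> ereal b \<le> ereal t"
    hence tb: "t < b" by simp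
    have sub: "{m. (\<Sum>i\<le>m. T i \<omega>) \<le> t} \<subseteq> {..<n}"
    proof
      fix m assume m: "m \<in> {m. (\<Sum>i\<le>m. T i \<omega>) \<le> t}"
      show "m \<in> {..<n}"
      proof (rule ccontr)
        assume "m \<notin> {..<n}"
        hence "n \<le> m" by simp
        hence "(\<Sum>i\<le>n. T i \<omega>) \<le> (\<Sum>i\<le>m. T i \<omega>)"
          by (intro sum_mono2) (use T0 in auto)
        with m Pn tb show False by simp
      qed
    qed
    have N: "CL_N T t \<omega> \<le> n"
      unfolding CL_N_def using card_mono[OF _ sub] by simp
    have "(\<Sum>i<CL_N T t \<omega>. U i \<omega>) \<le> (\<Sum>i<CL_N T t \<omega>. \<bar>U i \<omega>\<bar>)"
      by (intro sum_mono) simp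
    also have "\<dots> \<le> (\<Sum>i<n. \<bar>U i \<omega>\<bar>)"
      by (intro sum_mono2) (use N in auto)
    finally have S: "(\<Sum>i<CL_N T t \<omega>. U i \<omega>) \<le> (\<Sum>i<n. \<bar>U i \<omega>\<bar>)" .
    have I: "integral {0..t} (\<lambda>s. cbar) = cbar * t" using t by simp
    have "cbar * t \<le> cbar * b" using tb assms by (intro mult_left_mono) auto
    moreover have "0 \<le> p * t" using assms t by simp
    ultimately have "0 \<le> CL_XC x p T U (\<lambda>t \<omega>. cbar) t \<omega>"
      unfolding CL_XC_def CL_X_def I using S Ux by linarith
    with t show False by simp
  qed
qed



lemma const_adm:
  assumes "prob_space M" "x > 0" "0 \<le> c" "c \<le> cbar"
  shows "admissible M x p T U c cbar (\<lambda>t \<omega>. cbar)"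
proof -
  have filt: "{\<omega>\<in>space M. cbar \<in> D} \<in> CL_filtration M x p T U t" for D t
  proof (cases "cbar \<in> D")
    case True
    have "space M \<in> sigma_sets (space M) {CL_X x p T U s -` D \<inter> space M | s D. 0 \<le> s \<and> s \<le> t \<and> D \<in> sets borel}"
      by (rule sigma_sets_top)
    note * = this
    show ?thesis unfolding CL_filtration_def
      apply (rule CollectI, rule conjI, blast)
      apply (rule bexI[OF _ *]) using True by auto
  next
    case False
    have "{} \<in> sigma_sets (space M) {CL_X x p T U s -` D \<inter> space M | s D. 0 \<le> s \<and> s \<le> t \<and> D \<in> sets borel}"
      by (rule sigma_sets.Empty)
    then show ?thesis using False unfolding CL_filtration_def
      by (auto intro!: bexI[of _ "{}"])
  qed
  have conv: "cbar = p" if "((\<lambda>s. cbar) \<longlongrightarrow> p) (at_left (t::real))" for t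
    using tendsto_const_iff[of "at_left t" cbar p] that trivial_limit_at_left_real by auto
  show ?thesis unfolding admissible_def
    using filt conv assms by (auto simp: mono_on_def)
qed

lemma J_upper:
  assumes "prob_space M" "q > 0" "cbar \<ge> 0" "admissible M x p T U c cbar C"
  shows "CL_J M q x p T U C \<le> ennreal (cbar / q)"
proof -
  have ed: "(\<integral>\<^sup>+ s. exponential_density q s \<partial>lborel) = 1"
    using prob_space.emeasure_space_1[OF prob_space_exponential_density[OF assms(2)]]
    by (simp add: emeasure_density)
  have Cb: "\<And>\<omega> t. \<omega> \<in> space M \<Longrightarrow> 0 \<le> t \<Longrightarrow> C t \<omega> \<le> cbar" using assms(4) unfolding admissible_def by blast
  have inner: "(\<integral>\<^sup>+ s. indicator {s. 0 \<le> s \<and> ereal s < ruin_time x p T U C \<omega>} s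
                     * ennreal (exp (- q * s) * C s \<omega>) \<partial>lborel) \<le> ennreal (cbar / q)"
    if \<omega>: "\<omega> \<in> space M" for \<omega>
  proof -
    have "(\<integral>\<^sup>+ s. indicator {s. 0 \<le> s \<and> ereal s < ruin_time x p T U C \<omega>} s
                     * ennreal (exp (- q * s) * C s \<omega>) \<partial>lborel)
        \<le> (\<integral>\<^sup>+ s. ennreal (cbar / q) * ennreal (exponential_density q s) \<partial>lborel)"
    proof (rule nn_integral_mono)
      fix s
      show "indicator {s. 0 \<le> s \<and> ereal s < ruin_time x p T U C \<omega>} s
                     * ennreal (exp (- q * s) * C s \<omega>) \<le> ennreal (cbar / q) * ennreal (exponential_density q s)"
      proof (cases "0 \<le> s \<and> ereal s < ruin_time x p T U C \<omega>")
        case True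
        have "exp (- q * s) * C s \<omega> \<le> exp (- q * s) * cbar"
          using Cb[OF \<omega>] True by (intro mult_left_mono) auto
        also have "\<dots> = cbar / q * exponential_density q s"
          using True assms by (simp add: exponential_density_def mult.commute)
        finally show ?thesis using True assms
          by (simp add: ennreal_mult'[symmetric] ennreal_leI)
      qed simp
    qed
    also have "\<dots> = ennreal (cbar / q)"
      by (subst nn_integral_cmult) (auto simp: ed)
    finally show ?thesis .
  qed
  have "CL_J M q x p T U C \<le> (\<integral>\<^sup>+ \<omega>. ennreal (cbar / q) \<partial>M)"
    unfolding CL_J_def by (rule nn_integral_mono) (rule inner)
  also have "\<dots> = ennreal (cbar / q)"
    using prob_space.emeasure_space_1[OF assms(1)] by simp
  finally show ?thesis .
qed

lemma inner_lower:
  assumes "ereal b \<le> ruin_time x p T U (\<lambda>t \<omega>. cbar) \<omega>" "t0 < b" "0 \<le> t0" "q > 0" "cbar \<ge> 0"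
  shows "ennreal (cbar / q * (1 - exp (- q * t0))) \<le>
    (\<integral>\<^sup>+ s. indicator {s. 0 \<le> s \<and> ereal s < ruin_time x p T U (\<lambda>t \<omega>. cbar) \<omega>} s
                     * ennreal (exp (- q * s) * cbar) \<partial>lborel)"
proof -
  have "(\<integral>\<^sup>+ s. ennreal (exp (- q * s) * cbar) * indicator {0..t0} s \<partial>lborel)
      = ennreal ((\<lambda>s. - cbar / q * exp (- q * s)) t0 - (\<lambda>s. - cbar / q * exp (- q * s)) 0)"
    apply (rule nn_integral_FTC_Icc)
    using assms by (auto intro!: derivative_eq_intros simp: field_simps)
  also have "(\<lambda>s. - cbar / q * exp (- q * s)) t0 - (\<lambda>s. - cbar / q * exp (- q * s)) 0
     = cbar / q * (1 - exp (- q * t0))" by (simp add: algebra_simps add_divide_distrib[symmetric])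
  finally have eq: "(\<integral>\<^sup>+ s. ennreal (exp (- q * s) * cbar) * indicator {0..t0} s \<partial>lborel)
      = ennreal (cbar / q * (1 - exp (- q * t0)))" .
  have "(\<integral>\<^sup>+ s. ennreal (exp (- q * s) * cbar) * indicator {0..t0} s \<partial>lborel)
    \<le> (\<integral>\<^sup>+ s. indicator {s. 0 \<le> s \<and> ereal s < ruin_time x p T U (\<lambda>t \<omega>. cbar) \<omega>} s
                     * ennreal (exp (- q * s) * cbar) \<partial>lborel)"
  proof (rule nn_integral_mono)
    fix s
    show "ennreal (exp (- q * s) * cbar) * indicator {0..t0} s \<le>
       indicator {s. 0 \<le> s \<and> ereal s < ruin_time x p T U (\<lambda>t \<omega>. cbar) \<omega>} s * ennreal (exp (- q * s) * cbar)"
    proof (cases "s \<in> {0..t0}")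
      case True
      then have "ereal s < ereal b" using assms by simp
      also have "\<dots> \<le> ruin_time x p T U (\<lambda>t \<omega>. cbar) \<omega>" by fact
      finally show ?thesis using True by (simp add: indicator_def)
    qed simp
  qed
  with eq show ?thesis by simp
qed



lemma prob_part:
  fixes M :: "'a measure" and T U :: "nat \<Rightarrow> 'a \<Rightarrow> real"
  assumes ps: "prob_space M" and beta: "\<beta> > 0"
    and ind: "prob_space.indep_vars M (\<lambda>_. borel)
           (\<lambda>k. case k of Inl i \<Rightarrow> T i | Inr i \<Rightarrow> U i) (UNIV :: (nat + nat) set)"
    and dist: "\<And>i. distributed M lborel (T i) (exponential_density \<beta>)"
    and eta: "\<eta> > 0" and b: "b \<ge> 0"
  shows "\<exists>n. 1 - \<eta> \<le> measure M {\<omega>\<in>space M. (\<forall>i. 0 \<le> T i \<omega>) \<and> b < (\<Sum>i\<le>n. T i \<omega>)}"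
proof -
  interpret prob_space M by fact
  define X where "X = (\<lambda>k. case k of Inl i \<Rightarrow> T i | Inr i \<Rightarrow> U i)"
  have ind': "indep_vars (\<lambda>_. borel) X UNIV" using ind unfolding X_def .
  have rv: "X k \<in> borel_measurable M" for k
    using ind' unfolding indep_vars_def2 by auto
  have [measurable]: "T i \<in> borel_measurable M" for i
    using rv[of "Inl i"] by (simp add: X_def)
  define \<rho> where "\<rho> = 1 - exp (- b * \<beta>)"
  have PT: "prob {\<omega>\<in>space M. T i \<omega> \<le> b} = \<rho>" for i
    using exponential_distributedD_le[OF dist b beta] by (simp add: \<rho>_def)
  have PT0: "prob {\<omega>\<in>space M. T i \<omega> \<le> 0} = 0" for i
    using exponential_distributedD_le[OF dist _ beta, of 0] by simp
  have AEp: "AE \<omega> in M. 0 < T i \<omega>" for i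
    by (subst AE_iff_measurable[of "{\<omega>\<in>space M. T i \<omega> \<le> 0}"])
       (auto simp: emeasure_eq_measure PT0)
  have "AE \<omega> in M. 0 \<le> T i \<omega>" for i using AEp[of i] by (rule eventually_mono) simp
  hence "AE \<omega> in M. \<forall>i. 0 \<le> T i \<omega>" by (simp add: AE_all_countable)
  hence PW: "prob {\<omega>\<in>space M. \<forall>i. 0 \<le> T i \<omega>} = 1"
    by (subst prob_Collect_eq_1) auto
  have \<rho>1: "\<rho> < 1" using beta b unfolding \<rho>_def by simp
  obtain n where n: "\<rho> ^ n < \<eta>" using real_arch_pow_inv[OF eta \<rho>1] by blast
  have \<rho>0: "0 \<le> \<rho>" using beta b unfolding \<rho>_def by simp
  define W where "W = {\<omega>\<in>space M. \<forall>i. 0 \<le> T i \<omega>}"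
  define B where "B = {\<omega>\<in>space M. (\<forall>i. 0 \<le> T i \<omega>) \<and> (\<Sum>i\<le>n. T i \<omega>) \<le> b}"
  have [measurable]: "W \<in> sets M" "B \<in> sets M" unfolding W_def B_def by measurable
  have Bsub: "B \<subseteq> (\<Inter>j\<in>Inl ` {..n}. X j -` {..b} \<inter> space M)"
  proof
    fix \<omega> assume \<omega>: "\<omega> \<in> B"
    have "T i \<omega> \<le> b" if "i \<le> n" for i
    proof -
      have "T i \<omega> \<le> (\<Sum>i\<le>n. T i \<omega>)"
        using member_le_sum[of i "{..n}" "\<lambda>i. T i \<omega>"] \<omega> that unfolding B_def by auto
      thus ?thesis using \<omega> unfolding B_def by auto
    qed
    thus "\<omega> \<in> (\<Inter>j\<in>Inl ` {..n}. X j -` {..b} \<inter> space M)" using \<omega> unfolding B_def X_def by auto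
  qed
  have Isets: "(\<Inter>j\<in>Inl ` {..n}. X j -` {..b} \<inter> space M) \<in> sets M"
    by (intro sets.finite_INT) (auto intro!: measurable_sets[OF rv])
  have indsets: "indep_sets (\<lambda>i. { X i -` A \<inter> space M | A. A \<in> sets borel}) UNIV"
    using ind' unfolding indep_vars_def2 by auto
  have "prob (\<Inter>j\<in>Inl ` {..n}. X j -` {..b} \<inter> space M) = (\<Prod>j\<in>Inl ` {..n}. prob (X j -` {..b} \<inter> space M))"
    by (rule indep_setsD[OF indsets]) (auto intro!: exI[of _ "{..b}"])
  also have "\<dots> = (\<Prod>i\<le>n. prob (X (Inl i) -` {..b} \<inter> space M))"
    by (subst prod.reindex) (auto simp: inj_on_def)
  also have "\<dots> = (\<Prod>i\<le>n. \<rho>)"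
  proof (rule prod.cong[OF refl])
    fix i
    have "X (Inl i) -` {..b} \<inter> space M = {\<omega>\<in>space M. T i \<omega> \<le> b}" by (auto simp: X_def)
    thus "prob (X (Inl i) -` {..b} \<inter> space M) = \<rho>" using PT by simp
  qed
  also have "\<dots> = \<rho> ^ Suc n" by simp
  finally have "prob B \<le> \<rho> ^ Suc n"
    using finite_measure_mono[OF Bsub Isets] by linarith
  also have "\<dots> \<le> \<rho> ^ n" using \<rho>0 \<rho>1 by (simp add: mult_left_le_one_le)
  finally have PB: "prob B < \<eta>" using n by simp
  have eq: "{\<omega>\<in>space M. (\<forall>i. 0 \<le> T i \<omega>) \<and> b < (\<Sum>i\<le>n. T i \<omega>)} = W - B"
    unfolding W_def B_def by auto
  have "prob (W - B) = prob W - prob B"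
    by (rule finite_measure_Diff) (auto simp: W_def B_def)
  with PW PB eq show ?thesis unfolding W_def by (intro exI[of _ n]) simp
qed



theorem proposition4p5:
  fixes M :: "'a measure"
    and T U :: "nat \<Rightarrow> 'a \<Rightarrow> real"
    and F :: "real \<Rightarrow> real"
    and p \<beta> K cbar q :: real
  assumes "prob_space M"
    and "p > 0" and "\<beta> > 0"
    and "prob_space.indep_vars M (\<lambda>_. borel)
           (\<lambda>k. case k of Inl i \<Rightarrow> T i | Inr i \<Rightarrow> U i) (UNIV :: (nat + nat) set)"
    and "\<And>i. distributed M lborel (T i) (exponential_density \<beta>)"
    and "\<And>i x. measure M {\<omega> \<in> space M. U i \<omega> \<le> x} = F x"
    and "\<And>i. AE \<omega> in M. U i \<omega> > 0"
    and "continuous_on UNIV F"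
    and "K > 0" and "\<And>x y. \<bar>F x - F y\<bar> \<le> K * \<bar>x - y\<bar>"
    and "ennreal p > ennreal \<beta> * (\<integral>\<^sup>+ \<omega>. ennreal (U 0 \<omega>) \<partial>M)"
    and "cbar > 0" and "q > 0"
    and "c \<in> {0..cbar}"
  shows "((\<lambda>x. CL_V M q cbar p T U x c) \<longlongrightarrow> ennreal (cbar / q)) at_top"
proof -
  interpret prob_space M by fact
  note ps = \<open>prob_space M\<close>
  define L where "L = cbar / q"
  have L0: "L > 0" using assms unfolding L_def by simp
  have c: "0 \<le> c" "c \<le> cbar" using assms by auto
  define X where "X = (\<lambda>k. case k of Inl i \<Rightarrow> T i | Inr i \<Rightarrow> U i)"
  have rv: "X k \<in> borel_measurable M" for k
    using assms(4) unfolding X_def[symmetric] indep_vars_def2 by auto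
  have [measurable]: "T i \<in> borel_measurable M" for i
    using rv[of "Inl i"] by (simp add: X_def)
  have [measurable]: "U i \<in> borel_measurable M" for i
    using rv[of "Inr i"] by (simp add: X_def)
  have upper: "CL_V M q cbar p T U x c \<le> ennreal L" for x
    unfolding CL_V_def L_def
    by (rule SUP_least) (use J_upper[OF ps assms(13)] assms(12) in auto)
  have lower: "ennreal (L * (1 - exp (- q * t0))) * emeasure M
      {\<omega>\<in>space M. (\<forall>i. 0 \<le> T i \<omega>) \<and> b < (\<Sum>i\<le>n. T i \<omega>) \<and> (\<Sum>i<n. \<bar>U i \<omega>\<bar>) + cbar * b \<le> x}
      \<le> CL_V M q cbar p T U x c"
    if x: "x > 0" and t0: "0 \<le> t0" "t0 < b" for x t0 b n
  proof -
    define H where "H = {\<omega>\<in>space M. (\<forall>i. 0 \<le> T i \<omega>) \<and> b < (\<Sum>i\<le>n. T i \<omega>) \<and> (\<Sum>i<n. \<bar>U i \<omega>\<bar>) + cbar * b \<le> x}"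
    have [measurable]: "H \<in> sets M" unfolding H_def by measurable
    have "ennreal (L * (1 - exp (- q * t0))) * emeasure M H
       = (\<integral>\<^sup>+ \<omega>. ennreal (L * (1 - exp (- q * t0))) * indicator H \<omega> \<partial>M)"
      by (simp add: nn_integral_cmult_indicator)
    also have "\<dots> \<le> CL_J M q x p T U (\<lambda>t \<omega>. cbar)"
      unfolding CL_J_def
    proof (rule nn_integral_mono)
      fix \<omega> assume "\<omega> \<in> space M"
      show "ennreal (L * (1 - exp (- q * t0))) * indicator H \<omega> \<le>
         (\<integral>\<^sup>+ s. indicator {s. 0 \<le> s \<and> ereal s < ruin_time x p T U (\<lambda>t \<omega>. cbar) \<omega>} s
                     * ennreal (exp (- q * s) * cbar) \<partial>lborel)"
      proof (cases "\<omega> \<in> H")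
        case True
        have "ereal b \<le> ruin_time x p T U (\<lambda>t \<omega>. cbar) \<omega>"
          by (rule ruin_ge[where n=n]) (use True t0 assms in \<open>auto simp: H_def\<close>)
        from inner_lower[OF this t0(2) t0(1) assms(13)] assms(12) True
        show ?thesis by (simp add: L_def)
      qed simp
    qed
    also have "\<dots> \<le> CL_V M q cbar p T U x c"
      unfolding CL_V_def by (rule SUP_upper) (use const_adm[OF ps x c] in simp)
    finally show ?thesis unfolding H_def .
  qed
  show ?thesis
  proof (rule order_tendstoI)
    fix a assume "ennreal (cbar / q) < a"
    thus "\<forall>\<^sub>F x in at_top. CL_V M q cbar p T U x c < a"
      using upper unfolding L_def by (intro always_eventually allI) (rule le_less_trans)
  next
    fix a assume a: "a < ennreal (cbar / q)"
    then obtain ar where ar: "a = ennreal ar" "0 \<le> ar" by (cases a) auto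
    have arL: "ar < L" using a ar L0 unfolding L_def by (simp add: ennreal_less_iff)
    define \<eta> where "\<eta> = (L - ar) / (4 * L)"
    have \<eta>: "0 < \<eta>" "\<eta> < 1" "ar < L * (1 - 2 * \<eta>)"
      using arL L0 ar unfolding \<eta>_def by (auto simp: field_simps)
    define t0 where "t0 = - ln \<eta> / q"
    have t0: "0 \<le> t0" "exp (- q * t0) = \<eta>"
      using \<eta> assms(13) unfolding t0_def by (auto simp: field_simps)
    define b where "b = t0 + 1"
    have "\<eta> / 2 > 0" using \<eta> by simp
    from prob_part[OF ps assms(3) assms(4) assms(5) this, of b]
    obtain n where n: "1 - \<eta> / 2 \<le> prob {\<omega>\<in>space M. (\<forall>i. 0 \<le> T i \<omega>) \<and> b < (\<Sum>i\<le>n. T i \<omega>)}"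
      using t0 unfolding b_def by auto
    define G where "G = {\<omega>\<in>space M. (\<forall>i. 0 \<le> T i \<omega>) \<and> b < (\<Sum>i\<le>n. T i \<omega>)}"
    define E where "E = (\<lambda>m::nat. {\<omega>\<in>space M. (\<Sum>i<n. \<bar>U i \<omega>\<bar>) + cbar * b \<le> real m})"
    have [measurable]: "G \<in> sets M" "E m \<in> sets M" for m unfolding G_def E_def by measurable
    have "(\<lambda>m. prob (E m)) \<longlonglongrightarrow> prob (\<Union>m. E m)"
      by (rule finite_Lim_measure_incseq) (auto simp: incseq_def E_def)
    moreover have "(\<Union>m. E m) = space M"
    proof -
      have "\<exists>m. (\<Sum>i<n. \<bar>U i \<omega>\<bar>) + cbar * b \<le> real m" for \<omega>
        using real_arch_simple by blast
      thus ?thesis unfolding E_def by auto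
    qed
    ultimately have "(\<lambda>m. prob (E m)) \<longlonglongrightarrow> 1" by (simp add: prob_space)
    moreover have "1 - \<eta> / 2 < (1::real)" using \<eta> by simp
    ultimately have "eventually (\<lambda>m. 1 - \<eta> / 2 < prob (E m)) sequentially"
      by (rule order_tendstoD)
    then obtain m where m: "1 - \<eta> / 2 < prob (E m)" by (auto simp: eventually_sequentially)
    have PGE: "1 - \<eta> \<le> prob (G \<inter> E m)"
    proof -
      have "G \<subseteq> (G \<inter> E m) \<union> (space M - E m)" using sets.sets_into_space[of G M] by auto
      hence "prob G \<le> prob ((G \<inter> E m) \<union> (space M - E m))" by (intro finite_measure_mono) auto
      also have "\<dots> \<le> prob (G \<inter> E m) + prob (space M - E m)" by (intro measure_Un_le) auto
      also have "prob (space M - E m) = 1 - prob (E m)" by (rule prob_compl) simp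
      finally show ?thesis using n m unfolding G_def by simp
    qed
    show "\<forall>\<^sub>F x in at_top. a < CL_V M q cbar p T U x c"
      unfolding eventually_at_top_linorder
    proof (intro exI[of _ "real m + 1"] allI impI)
      fix x assume x: "real m + 1 \<le> x"
      define H where "H = {\<omega>\<in>space M. (\<forall>i. 0 \<le> T i \<omega>) \<and> b < (\<Sum>i\<le>n. T i \<omega>) \<and> (\<Sum>i<n. \<bar>U i \<omega>\<bar>) + cbar * b \<le> x}"
      have [measurable]: "H \<in> sets M" unfolding H_def by measurable
      have "G \<inter> E m \<subseteq> H" using x unfolding G_def E_def H_def by auto
      hence PH: "1 - \<eta> \<le> prob H" using PGE finite_measure_mono[of "G \<inter> E m" H] by auto
      have "ar < L * (1 - \<eta>) * (1 - \<eta>)"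
      proof -
        have "L * (1 - 2 * \<eta>) \<le> L * (1 - 2 * \<eta>) + L * \<eta> * \<eta>" using L0 \<eta> by simp
        thus ?thesis using \<eta>(3) by (simp add: algebra_simps)
      qed
      also have "\<dots> \<le> L * (1 - exp (- q * t0)) * prob H"
        using t0 PH L0 \<eta> by (simp add: mult_left_mono)
      finally have "a < ennreal (L * (1 - exp (- q * t0))) * emeasure M H"
        using ar \<eta> L0 t0
        by (simp add: emeasure_eq_measure ennreal_mult'[symmetric] ennreal_less_iff)
      also have "\<dots> \<le> CL_V M q cbar p T U x c"
        unfolding H_def by (rule lower) (use x t0 in \<open>auto simp: b_def\<close>)
      finally show "a < CL_V M q cbar p T U x c" .
    qed
  qed
qed

end
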